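(* In the setting described in the context, assume (F1) and (F2), that $\alpha\le\frac{2}{L+\beta}$, that $\rho:=\sigma_W(1+\alpha L\delta)<1$, and that there exists $R>0$ with $\|\bar w(t)-w_*\|\le R$ for all $t\ge0$. Let $\mathbf D_1=\delta\|1_n-n\pi\|_\pi+\sqrt{\sum_{j=1}^n 1/\pi_j}$, $\mathbf D_2=L\delta\|1_n-n\pi\|_\pi\|w_*\|+\|\nabla F(1_n\otimes w_* )\|_{\pi\otimes1_d}$, and $\bar R=L\mathbf D_1R+\mathbf D_2$. Then for all $t\ge0$, $$\|w(t)-n\pi\otimes\bar w(t)\|_{\pi\otimes1_d}\le\rho^t\|w(0)-n\pi\otimes\bar w(0)\|_{\pi\otimes1_d}+\frac{\alpha\sigma_W\bar R}{1-\rho}$$ and $$\begin{aligned}\|\bar w(t)-w_*\|&\le(1-\gamma\alpha)^t\|\bar w(0)-w_*\|+\frac{\alpha L\delta}{n}\|w(0)-n\pi\otimes\bar w(0)\|_{\pi\otimes1_d}\,t\,[\max\{1-\gamma\alpha,\rho\}]^{t-1}\\&\quad+\frac{\alpha L\delta}{n}\|1_n-n\pi\|_\pi(\|w_*\|+R)\,t\,[\max\{1-\gamma\alpha,\sigma_W\}]^{t-1}+\frac{\alpha L\delta}{n\gamma}\frac{\sigma_W\bar R}{1-\rho}.\end{aligned}$$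
   Context: Graph and weights: $G=(V,E)$ directed, $V=\{1,\dots,n\}$, $(i,i)\in E$ for all $i$, and $G$ strongly connected. Let $d_j=|\{i:(j,i)\in E\}|$ and $W_{ij}=1/d_j$ if $(j,i)\in E$, $W_{ij}=0$ otherwise. Let $\pi\in\mathbb R^n$ be the vector with $W\pi=\pi$, $\pi_i>0$, $\sum_i\pi_i=1$, and $W^\infty=\pi 1_n^\top$. For $x\in\mathbb R^n$, $\|x\|_\pi=(\sum_i x_i^2/\pi_i)^{1/2}$, $|||A|||_\pi$ is the induced operator norm, and $\sigma_W:=|||W-W^\infty|||_\pi$ (known to satisfy $\sigma_W<1$). For $x=\mathrm{col}(x_1,\dots,x_n)\in\mathbb R^{nd}$, $\|x\|_{\pi\otimes1_d}=(\sum_i\|x_i\|^2/\pi_i)^{1/2}$; $\|\cdot\|$ is Euclidean. For $v\in\mathbb R^n$, $u\in\mathbb R^d$, $v\otimes u=\mathrm{col}(v_1u,\dots,v_nu)$. Costs: $f_i:\mathbb R^d\to\mathbb R$, $f=\frac1n\sum_i f_i$. (F1): each $\nabla f_i$ is Lipschitz with constant $L_i>0$; $L:=\max_iL_i$. (F2): $f$ is $\beta$-strongly convex, $\beta>0$. $w_*$ is the unique minimizer of $f$; $\gamma=\frac{\beta L}{\beta+L}$; $\nabla F(x)=\mathrm{col}(\nabla f_1(x_1),\dots,\nabla f_n(x_n))$. Gradient-push algorithm with stepsize $\alpha>0$: given $w(0)\in\mathbb R^{nd}$ and $y(0)=1_n$, for $t\ge0$: $z_i(t)=w_i(t)/y_i(t)$,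 $x_i(t)=w_i(t)-\alpha\nabla f_i(z_i(t))$, $w_i(t+1)=\sum_jW_{ij}x_j(t)$, $y_i(t+1)=\sum_jW_{ij}y_j(t)$. $\bar w(t)=\frac1n\sum_iw_i(t)$. $\delta:=\sup_{t\ge0}\max_i1/y_i(t)$ (finite). *)

theory Defs
  imports "HOL-Analysis.Analysis"
begin

text \<open>Nodes are indexed by 0..<n (the paper uses 1..n). Vectors in R^n are functions
  nat => real, block vectors in R^(nd) are functions nat => 'a with 'a a Euclidean space.\<close>

definition out_deg :: "(nat \<times> nat) set \<Rightarrow> nat \<Rightarrow> nat" where
  "out_deg E j = card {i. (j, i) \<in> E}"

definition weight_mat :: "(nat \<times> nat) set \<Rightarrow> nat \<Rightarrow> nat \<Rightarrow> real" where
  "weight_mat E i j = (if (j, i) \<in> E then 1 / real (out_deg E j) else 0)"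

definition mat_vec :: "nat \<Rightarrow> (nat \<Rightarrow> nat \<Rightarrow> real) \<Rightarrow> (nat \<Rightarrow> real) \<Rightarrow> nat \<Rightarrow> real" where
  "mat_vec n A x = (\<lambda>i. \<Sum>j<n. A i j * x j)"

definition pi_norm :: "nat \<Rightarrow> (nat \<Rightarrow> real) \<Rightarrow> (nat \<Rightarrow> real) \<Rightarrow> real" where
  "pi_norm n p x = sqrt (\<Sum>i<n. (x i)\<^sup>2 / p i)"

definition pi_op_norm :: "nat \<Rightarrow> (nat \<Rightarrow> real) \<Rightarrow> (nat \<Rightarrow> nat \<Rightarrow> real) \<Rightarrow> real" where
  "pi_op_norm n p A = Sup {pi_norm n p (mat_vec n A x) | x. pi_norm n p x \<le> 1}"

definition pi_block_norm :: "nat \<Rightarrow> (nat \<Rightarrow> real) \<Rightarrow> (nat \<Rightarrow> 'a::euclidean_space) \<Rightarrow> real" where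
  "pi_block_norm n p x = sqrt (\<Sum>i<n. (norm (x i))\<^sup>2 / p i)"

definition strongly_convex :: "real \<Rightarrow> ('a::real_normed_vector \<Rightarrow> real) \<Rightarrow> bool" where
  "strongly_convex \<beta> h \<longleftrightarrow> (\<forall>x y. \<forall>s::real. 0 \<le> s \<and> s \<le> 1 \<longrightarrow>
     h (s *\<^sub>R x + (1 - s) *\<^sub>R y) \<le> s * h x + (1 - s) * h y - \<beta> / 2 * s * (1 - s) * (norm (x - y))\<^sup>2)"

end

theory Submission
  imports Defs
begin



lemma pi_norm_L2:
  assumes "\<forall>i<n. p i > 0"
  shows "pi_norm n p x = L2_set (\<lambda>i. x i / sqrt (p i)) {..<n}"
  unfolding pi_norm_def L2_set_def
  by (rule arg_cong[where f=sqrt], rule sum.cong, simp, use assms in \<open>simp add: power_divide less_imp_le\<close>)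


lemma pi_norm_tri:
  assumes "\<forall>i<n. p i > 0"
  shows "pi_norm n p (\<lambda>i. x i + z i) \<le> pi_norm n p x + pi_norm n p z"
  unfolding pi_norm_L2[OF assms] by (simp add: add_divide_distrib L2_set_triangle_ineq)

lemma pi_norm_nonneg':
  assumes "\<forall>i<n. p i > 0"
  shows "pi_norm n p x \<ge> 0"
  unfolding pi_norm_L2[OF assms] by simp

lemma pi_norm_mono:
  assumes "\<forall>i<n. p i > 0" "\<forall>i<n. \<bar>x i\<bar> \<le> z i"
  shows "pi_norm n p x \<le> pi_norm n p z"
  unfolding pi_norm_def
proof (rule real_sqrt_le_mono, rule sum_mono)
  fix i assume "i \<in> {..<n}"
  then have "p i > 0" "\<bar>x i\<bar> \<le> z i" using assms by auto
  then have "(x i)\<^sup>2 \<le> (z i)\<^sup>2"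
    by (metis abs_ge_zero abs_le_self_iff order.trans power2_abs power_mono)
  then show "(x i)\<^sup>2 / p i \<le> (z i)\<^sup>2 / p i" using \<open>p i > 0\<close> by (simp add: divide_right_mono)
qed

lemma pi_norm_scale:
  assumes "\<forall>i<n. p i > 0"
  shows "pi_norm n p (\<lambda>i. c * x i) = \<bar>c\<bar> * pi_norm n p x"
proof -
  have "pi_norm n p (\<lambda>i. c * x i) = sqrt (c\<^sup>2 * (\<Sum>i<n. (x i)\<^sup>2 / p i))"
    unfolding pi_norm_def by (simp add: sum_distrib_left power_mult_distrib)
  then show ?thesis unfolding pi_norm_def by (simp add: real_sqrt_mult)
qed

lemma pi_norm_sum_abs:
  assumes "\<forall>i<n. p i > 0" "(\<Sum>i<n. p i) = 1"
  shows "(\<Sum>i<n. \<bar>x i\<bar>) \<le> pi_norm n p x"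
proof -
  have "(\<Sum>i<n. \<bar>x i\<bar>) = (\<Sum>i<n. \<bar>x i / sqrt (p i)\<bar> * \<bar>sqrt (p i)\<bar>)"
    using assms(1) by (intro sum.cong) (auto simp: abs_mult abs_divide)
  also have "\<dots> \<le> L2_set (\<lambda>i. x i / sqrt (p i)) {..<n} * L2_set (\<lambda>i. sqrt (p i)) {..<n}"
    by (rule L2_set_mult_ineq)
  also have "L2_set (\<lambda>i. sqrt (p i)) {..<n} = 1"
    unfolding L2_set_def using assms by (simp add: less_imp_le)
  finally show ?thesis by (simp add: pi_norm_L2[OF assms(1)])
qed

lemma pi_norm_comp:
  assumes "\<forall>i<n. p i > 0" "(\<Sum>i<n. p i) = 1" "k < n"
  shows "\<bar>x k\<bar> \<le> pi_norm n p x"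
proof -
  have "\<bar>x k\<bar> \<le> (\<Sum>i<n. \<bar>x i\<bar>)"
    using assms(3) by (intro member_le_sum) auto
  then show ?thesis using pi_norm_sum_abs[OF assms(1,2), of x] by linarith
qed

lemma pi_norm_zero:
  assumes "\<forall>i<n. p i > 0" "(\<Sum>i<n. p i) = 1" "pi_norm n p x = 0" "k < n"
  shows "x k = 0"
  using pi_norm_comp[OF assms(1,2,4), of x] assms(3) by simp

lemma pi_norm_cong:
  assumes "\<forall>i<n. x i = z i"
  shows "pi_norm n p x = pi_norm n p z"
  unfolding pi_norm_def using assms by (intro arg_cong[where f=sqrt] sum.cong) auto

lemma pi_norm_tri4:
  assumes "\<forall>i<n. p i > 0"
  shows "pi_norm n p (\<lambda>i. a i + b i + c i + d i) \<le> pi_norm n p a + pi_norm n p b + pi_norm n p c + pi_norm n p d"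
  using pi_norm_tri[OF assms, of "\<lambda>i. a i + b i + c i" d] pi_norm_tri[OF assms, of "\<lambda>i. a i + b i" c]
    pi_norm_tri[OF assms, of a b] by linarith

lemma pi_norm_abs: "pi_norm n p (\<lambda>i. \<bar>x i\<bar>) = pi_norm n p x"
  unfolding pi_norm_def by simp

lemma pi_norm_one: "pi_norm n p (\<lambda>i. 1) = sqrt (\<Sum>j<n. 1 / p j)"
  unfolding pi_norm_def by simp




lemma pi_norm_zero_fun: "pi_norm n p (\<lambda>i. 0) = 0"
  unfolding pi_norm_def by simp

lemma pi_norm_sq:
  assumes "\<forall>i<n. p i > 0"
  shows "(pi_norm n p x)\<^sup>2 = (\<Sum>i<n. (x i)\<^sup>2 / p i)"
  unfolding pi_norm_def using assms by (intro real_sqrt_pow2 sum_nonneg) (auto intro: divide_nonneg_pos)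

lemma mat_vec_scale: "mat_vec n A (\<lambda>j. c * x j) i = c * mat_vec n A x i"
  unfolding mat_vec_def by (simp add: sum_distrib_left algebra_simps)

lemma mat_vec_scale': "mat_vec n A (\<lambda>j. c * x j) = (\<lambda>i. c * mat_vec n A x i)"
  using mat_vec_scale by blast

lemma op_bdd:
  assumes "\<forall>i<n. p i > 0" "(\<Sum>i<n. p i) = 1"
  shows "bdd_above {pi_norm n p (mat_vec n A x) | x. pi_norm n p x \<le> 1}"
proof (rule bdd_aboveI)
  fix r assume "r \<in> {pi_norm n p (mat_vec n A x) | x. pi_norm n p x \<le> 1}"
  then obtain x where r: "r = pi_norm n p (mat_vec n A x)" and x: "pi_norm n p x \<le> 1" by auto
  have "\<forall>i<n. \<bar>mat_vec n A x i\<bar> \<le> (\<Sum>j<n. \<bar>A i j\<bar>)"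
  proof (intro allI impI)
    fix i assume "i < n"
    have "\<bar>mat_vec n A x i\<bar> \<le> (\<Sum>j<n. \<bar>A i j * x j\<bar>)"
      unfolding mat_vec_def by (rule sum_abs)
    also have "\<dots> \<le> (\<Sum>j<n. \<bar>A i j\<bar>)"
    proof (rule sum_mono)
      fix j assume "j \<in> {..<n}"
      then have "\<bar>x j\<bar> \<le> 1" using pi_norm_comp[OF assms, of j x] x by auto
      then show "\<bar>A i j * x j\<bar> \<le> \<bar>A i j\<bar>"
        by (simp add: abs_mult mult_left_le)
    qed
    finally show "\<bar>mat_vec n A x i\<bar> \<le> (\<Sum>j<n. \<bar>A i j\<bar>)" .
  qed
  then show "r \<le> pi_norm n p (\<lambda>i. \<Sum>j<n. \<bar>A i j\<bar>)"
    unfolding r by (rule pi_norm_mono[OF assms(1)])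
qed

lemma op_nonneg:
  assumes "\<forall>i<n. p i > 0" "(\<Sum>i<n. p i) = 1"
  shows "pi_op_norm n p A \<ge> 0"
proof -
  have "pi_norm n p (mat_vec n A (\<lambda>i. 0)) \<in> {pi_norm n p (mat_vec n A x) | x. pi_norm n p x \<le> 1}"
    by (auto simp: pi_norm_zero_fun)
  then have "pi_norm n p (mat_vec n A (\<lambda>i. 0)) \<le> pi_op_norm n p A"
    unfolding pi_op_norm_def by (rule cSup_upper[OF _ op_bdd[OF assms]])
  then show ?thesis using pi_norm_nonneg'[OF assms(1)] by (meson order_trans)
qed

lemma op_bound:
  assumes "\<forall>i<n. p i > 0" "(\<Sum>i<n. p i) = 1"
  shows "pi_norm n p (mat_vec n A x) \<le> pi_op_norm n p A * pi_norm n p x"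
proof (cases "pi_norm n p x = 0")
  case True
  then have "\<forall>k<n. x k = 0" using pi_norm_zero[OF assms] by blast
  then have "\<forall>i<n. mat_vec n A x i = 0" unfolding mat_vec_def by simp
  then have "pi_norm n p (mat_vec n A x) = 0"
    using pi_norm_cong[of n "mat_vec n A x" "\<lambda>i. 0" p] pi_norm_zero_fun by simp
  then show ?thesis using True by simp
next
  case False
  define N where "N = pi_norm n p x"
  have N: "N > 0" using False pi_norm_nonneg'[OF assms(1)] unfolding N_def
    by (metis order_le_less)
  have "pi_norm n p (\<lambda>i. (1/N) * x i) = \<bar>1/N\<bar> * N"
    unfolding N_def by (rule pi_norm_scale[OF assms(1)])
  also have "\<dots> = 1" using N by simp
  finally have "pi_norm n p (\<lambda>i. (1/N) * x i) = 1" .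
  then have "pi_norm n p (mat_vec n A (\<lambda>i. (1/N) * x i)) \<le> pi_op_norm n p A"
    unfolding pi_op_norm_def by (intro cSup_upper[OF _ op_bdd[OF assms]]) auto
  moreover have "pi_norm n p (mat_vec n A (\<lambda>i. (1/N) * x i)) = (1/N) * pi_norm n p (mat_vec n A x)"
    by (simp only: mat_vec_scale' pi_norm_scale[OF assms(1)]) (use N in simp)
  ultimately have "(1/N) * pi_norm n p (mat_vec n A x) \<le> pi_op_norm n p A" by simp
  then have "pi_norm n p (mat_vec n A x) \<le> pi_op_norm n p A * N"
    using N by (simp add: field_simps)
  then show ?thesis unfolding N_def .
qed

lemma norm_sq_basis: "(norm (v::'a::euclidean_space))\<^sup>2 = (\<Sum>b\<in>Basis. (v \<bullet> b)\<^sup>2)"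
proof -
  have "(norm v)\<^sup>2 = v \<bullet> v" by (rule power2_norm_eq_inner)
  also have "\<dots> = (\<Sum>b\<in>Basis. (v \<bullet> b) * (v \<bullet> b))" by (rule euclidean_inner)
  finally show ?thesis by (simp add: power2_eq_square)
qed

lemma blk_sq:
  assumes "\<forall>i<n. p i > 0"
  shows "(pi_block_norm n p (x::nat \<Rightarrow> 'a::euclidean_space))\<^sup>2 = (\<Sum>b\<in>Basis. (pi_norm n p (\<lambda>i. x i \<bullet> b))\<^sup>2)"
proof -
  have "(pi_block_norm n p x)\<^sup>2 = (\<Sum>i<n. (norm (x i))\<^sup>2 / p i)"
    unfolding pi_block_norm_def using assms by (intro real_sqrt_pow2 sum_nonneg) (auto intro: divide_nonneg_pos)
  also have "\<dots> = (\<Sum>i<n. \<Sum>b\<in>Basis. (x i \<bullet> b)\<^sup>2 / p i)"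
    by (simp add: norm_sq_basis sum_divide_distrib)
  also have "\<dots> = (\<Sum>b\<in>Basis. \<Sum>i<n. (x i \<bullet> b)\<^sup>2 / p i)" by (rule sum.swap)
  also have "\<dots> = (\<Sum>b\<in>Basis. (pi_norm n p (\<lambda>i. x i \<bullet> b))\<^sup>2)"
    by (simp add: pi_norm_sq[OF assms])
  finally show ?thesis .
qed


lemma blk_as_pi: "pi_block_norm n p x = pi_norm n p (\<lambda>i. norm (x i))"
  unfolding pi_block_norm_def pi_norm_def by simp

lemma blk_op_bound:
  assumes "\<forall>i<n. p i > 0" "(\<Sum>i<n. p i) = 1"
  shows "pi_block_norm n p (\<lambda>i. \<Sum>j<n. A i j *\<^sub>R (x::nat \<Rightarrow> 'a::euclidean_space) j)
         \<le> pi_op_norm n p A * pi_block_norm n p x"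
proof -
  let ?v = "\<lambda>i. \<Sum>j<n. A i j *\<^sub>R x j"
  let ?s = "pi_op_norm n p A"
  have s0: "?s \<ge> 0" by (rule op_nonneg[OF assms])
  have "(pi_block_norm n p ?v)\<^sup>2 = (\<Sum>b\<in>Basis. (pi_norm n p (\<lambda>i. ?v i \<bullet> b))\<^sup>2)"
    by (rule blk_sq[OF assms(1)])
  also have "\<dots> = (\<Sum>b\<in>Basis. (pi_norm n p (mat_vec n A (\<lambda>j. x j \<bullet> b)))\<^sup>2)"
    by (simp add: mat_vec_def inner_sum_left)
  also have "\<dots> \<le> (\<Sum>b\<in>Basis. (?s * pi_norm n p (\<lambda>j. x j \<bullet> b))\<^sup>2)"
  proof (rule sum_mono)
    fix b :: 'a
    show "(pi_norm n p (mat_vec n A (\<lambda>j. x j \<bullet> b)))\<^sup>2 \<le> (?s * pi_norm n p (\<lambda>j. x j \<bullet> b))\<^sup>2"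
      by (rule power_mono[OF op_bound[OF assms] pi_norm_nonneg'[OF assms(1)]])
  qed
  also have "\<dots> = ?s\<^sup>2 * (\<Sum>b\<in>Basis. (pi_norm n p (\<lambda>j. x j \<bullet> b))\<^sup>2)"
    by (simp add: power_mult_distrib sum_distrib_left)
  also have "\<dots> = (?s * pi_block_norm n p x)\<^sup>2"
    by (simp add: blk_sq[OF assms(1)] power_mult_distrib)
  finally have "(pi_block_norm n p ?v)\<^sup>2 \<le> (?s * pi_block_norm n p x)\<^sup>2" .
  moreover have "?s * pi_block_norm n p x \<ge> 0"
    using s0 pi_norm_nonneg'[OF assms(1)] unfolding blk_as_pi by simp
  ultimately show ?thesis by (rule power2_le_imp_le)
qed




lemma line_deriv:
  fixes F :: "'a::euclidean_space \<Rightarrow> real"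
  assumes "\<forall>x. (F has_derivative (\<lambda>h. h \<bullet> G x)) (at x)"
  shows "((\<lambda>s. F (x + s *\<^sub>R v)) has_real_derivative (v \<bullet> G (x + s *\<^sub>R v))) (at s)"
proof -
  have l: "((\<lambda>s. x + s *\<^sub>R v) has_derivative (\<lambda>t. t *\<^sub>R v)) (at s)"
    by (auto intro!: derivative_eq_intros)
  have "((\<lambda>s. F (x + s *\<^sub>R v)) has_derivative (\<lambda>t. (t *\<^sub>R v) \<bullet> G (x + s *\<^sub>R v))) (at s)"
    using has_derivative_compose[OF l assms[rule_format, of "x + s *\<^sub>R v"]] by (simp add: o_def)
  moreover have "(\<lambda>t. (t *\<^sub>R v) \<bullet> G (x + s *\<^sub>R v)) = (*) (v \<bullet> G (x + s *\<^sub>R v))"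
    by (auto simp: mult.commute)
  ultimately show ?thesis by (simp add: has_field_derivative_def)
qed

lemma descent:
  fixes F :: "'a::euclidean_space \<Rightarrow> real"
  assumes grad: "\<forall>x. (F has_derivative (\<lambda>h. h \<bullet> G x)) (at x)"
    and lip: "\<forall>x y. norm (G x - G y) \<le> L * norm (x - y)"
  shows "F y \<le> F x + G x \<bullet> (y - x) + L / 2 * (norm (y - x))\<^sup>2"
proof -
  define v where "v = y - x"
  define \<psi> where "\<psi> s = F (x + s *\<^sub>R v) - s * (v \<bullet> G x) - L / 2 * s\<^sup>2 * (norm v)\<^sup>2" for s
  have "\<psi> 1 \<le> \<psi> 0"
  proof (rule DERIV_nonpos_imp_nonincreasing[of 0 1 \<psi>])
    fix s :: real assume s: "0 \<le> s" "s \<le> 1"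
    have d: "(\<psi> has_real_derivative (v \<bullet> G (x + s *\<^sub>R v) - v \<bullet> G x - L * s * (norm v)\<^sup>2)) (at s)"
      unfolding \<psi>_def
      by (rule line_deriv[OF grad] derivative_eq_intros refl | simp)+
    have "v \<bullet> G (x + s *\<^sub>R v) - v \<bullet> G x = v \<bullet> (G (x + s *\<^sub>R v) - G x)"
      by (simp add: inner_diff_right)
    also have "\<dots> \<le> norm v * norm (G (x + s *\<^sub>R v) - G x)"
      by (metis Cauchy_Schwarz_ineq2 abs_le_iff)
    also have "\<dots> \<le> norm v * (L * norm (s *\<^sub>R v))"
      using lip[rule_format, of "x + s *\<^sub>R v" x] by (intro mult_left_mono) auto
    also have "\<dots> = L * s * (norm v)\<^sup>2" using s by (simp add: power2_eq_square)
    finally show "\<exists>y. (\<psi> has_real_derivative y) (at s) \<and> y \<le> 0"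
      using d by (intro exI[of _ "v \<bullet> G (x + s *\<^sub>R v) - v \<bullet> G x - L * s * (norm v)\<^sup>2"]) auto
  qed simp
  then show ?thesis unfolding \<psi>_def v_def by (simp add: inner_commute)
qed

lemma sc_lower:
  fixes F :: "'a::euclidean_space \<Rightarrow> real"
  assumes grad: "\<forall>x. (F has_derivative (\<lambda>h. h \<bullet> G x)) (at x)"
    and sc: "strongly_convex \<beta> F"
  shows "F y \<ge> F x + G x \<bullet> (y - x) + \<beta> / 2 * (norm (y - x))\<^sup>2"
proof -
  define v where "v = y - x"
  define q where "q s = (F (x + s *\<^sub>R v) - F x) / s" for s
  have ineq: "q s \<le> F y - F x - \<beta> / 2 * (1 - s) * (norm v)\<^sup>2" if s: "0 < s" "s \<le> 1" for s
  proof -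
    have "F (s *\<^sub>R y + (1 - s) *\<^sub>R x) \<le> s * F y + (1 - s) * F x - \<beta> / 2 * s * (1 - s) * (norm (y - x))\<^sup>2"
      using sc s unfolding strongly_convex_def by auto
    moreover have "s *\<^sub>R y + (1 - s) *\<^sub>R x = x + s *\<^sub>R v"
      unfolding v_def by (simp add: algebra_simps)
    ultimately have "F (x + s *\<^sub>R v) - F x \<le> s * (F y - F x - \<beta> / 2 * (1 - s) * (norm v)\<^sup>2)"
      unfolding v_def by (simp add: algebra_simps)
    then show ?thesis unfolding q_def using s by (simp add: divide_le_eq mult.commute)
  qed
  have d0: "((\<lambda>s. F (x + s *\<^sub>R v)) has_real_derivative (v \<bullet> G x)) (at 0)"
    using line_deriv[OF grad, of x v 0] by simp
  then have "((\<lambda>s. (F (x + s *\<^sub>R v) - F x) / s) \<longlongrightarrow> v \<bullet> G x) (at 0)"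
    unfolding has_field_derivative_iff by simp
  then have lim1: "(q \<longlongrightarrow> v \<bullet> G x) (at_right 0)"
    unfolding q_def by (rule filterlim_mono) (auto simp: at_le)
  have lim2: "((\<lambda>s. F y - F x - \<beta> / 2 * (1 - s) * (norm v)\<^sup>2) \<longlongrightarrow> F y - F x - \<beta> / 2 * (1 - 0) * (norm v)\<^sup>2) (at_right 0)"
    by (intro tendsto_intros)
  have ev: "eventually (\<lambda>s. q s \<le> F y - F x - \<beta> / 2 * (1 - s) * (norm v)\<^sup>2) (at_right 0)"
    unfolding eventually_at_right_field
    by (rule exI[of _ 1]) (use ineq in auto)
  have "v \<bullet> G x \<le> F y - F x - \<beta> / 2 * (1 - 0) * (norm v)\<^sup>2"
    by (rule tendsto_le[OF _ lim2 lim1 ev]) simp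
  then show ?thesis unfolding v_def by (simp add: inner_commute)
qed




lemma cocoercive:
  fixes \<phi> :: "'a::euclidean_space \<Rightarrow> real"
  assumes lower: "\<forall>x y. \<phi> y \<ge> \<phi> x + D x \<bullet> (y - x)"
    and upper: "\<forall>x y. \<phi> y \<le> \<phi> x + D x \<bullet> (y - x) + l / 2 * (norm (y - x))\<^sup>2"
    and l: "l > 0"
  shows "l * ((D x - D y) \<bullet> (x - y)) \<ge> (norm (D x - D y))\<^sup>2"
proof -
  have key: "\<phi> b \<ge> \<phi> a + D a \<bullet> (b - a) + 1 / (2 * l) * (norm (D a - D b))\<^sup>2" for a b
  proof -
    define z where "z = b - (1 / l) *\<^sub>R (D b - D a)"
    have 1: "\<phi> z \<ge> \<phi> a + D a \<bullet> (z - a)" using lower by auto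
    have 2: "\<phi> z \<le> \<phi> b + D b \<bullet> (z - b) + l / 2 * (norm (z - b))\<^sup>2" using upper by auto
    have e1: "D a \<bullet> (z - a) = D a \<bullet> (b - a) - (1 / l) * (D a \<bullet> (D b - D a))"
      unfolding z_def by (simp add: inner_diff_right algebra_simps)
    have e2: "D b \<bullet> (z - b) = - (1 / l) * (D b \<bullet> (D b - D a))"
      unfolding z_def by (simp add: inner_diff_right algebra_simps)
    have e3: "l / 2 * (norm (z - b))\<^sup>2 = 1 / (2 * l) * ((D b - D a) \<bullet> (D b - D a))"
    proof -
      have "z - b = - ((1 / l) *\<^sub>R (D b - D a))" unfolding z_def by simp
      then have "(norm (z - b))\<^sup>2 = (1 / l)\<^sup>2 * (norm (D b - D a))\<^sup>2"
        using l by (simp add: power_divide)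
      then show ?thesis using l by (simp add: power2_norm_eq_inner[symmetric] power2_eq_square)
    qed
    have e4: "(norm (D a - D b))\<^sup>2 = (D b - D a) \<bullet> (D b - D a)"
      by (simp add: power2_norm_eq_inner[symmetric] norm_minus_commute)
    have e5: "(D b - D a) \<bullet> (D b - D a) = D b \<bullet> (D b - D a) - D a \<bullet> (D b - D a)"
      by (simp add: inner_diff_left)
    from 1 2 e1 e2 e3 e4 e5 l show ?thesis
      by (simp add: field_simps)
  qed
  have "\<phi> y \<ge> \<phi> x + D x \<bullet> (y - x) + 1 / (2 * l) * (norm (D x - D y))\<^sup>2" by (rule key)
  moreover have "\<phi> x \<ge> \<phi> y + D y \<bullet> (x - y) + 1 / (2 * l) * (norm (D y - D x))\<^sup>2" by (rule key)
  moreover have "norm (D y - D x) = norm (D x - D y)" by (rule norm_minus_commute)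
  moreover have "(D x - D y) \<bullet> (x - y) = - (D x \<bullet> (y - x)) - D y \<bullet> (x - y)"
    by (simp add: inner_diff_left inner_diff_right algebra_simps)
  ultimately have "(D x - D y) \<bullet> (x - y) \<ge> 1 / l * (norm (D x - D y))\<^sup>2" by simp
  then show ?thesis using l by (simp add: field_simps)
qed




lemma beta_le_L:
  fixes F :: "'a::euclidean_space \<Rightarrow> real"
  assumes grad: "\<forall>x. (F has_derivative (\<lambda>h. h \<bullet> G x)) (at x)"
    and sc: "strongly_convex \<beta> F"
    and lip: "\<forall>x y. norm (G x - G y) \<le> L * norm (x - y)"
  shows "\<beta> \<le> L"
proof -
  define b :: 'a where "b = (SOME i. i \<in> Basis)"
  have nb: "norm b = 1" unfolding b_def by simp
  have "F b \<ge> F 0 + G 0 \<bullet> (b - 0) + \<beta> / 2 * (norm (b - 0))\<^sup>2" by (rule sc_lower[OF grad sc])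
  moreover have "F b \<le> F 0 + G 0 \<bullet> (b - 0) + L / 2 * (norm (b - 0))\<^sup>2" by (rule descent[OF grad lip])
  ultimately show ?thesis using nb by simp
qed

lemma norm_sq_expand: "(norm (y - x))\<^sup>2 = (norm (y::'a::real_inner))\<^sup>2 - (norm x)\<^sup>2 - 2 * (x \<bullet> (y - x))"
  by (simp add: power2_norm_eq_inner inner_diff_left inner_diff_right inner_commute algebra_simps)

lemma sc_cocoercive:
  fixes F :: "'a::euclidean_space \<Rightarrow> real"
  assumes grad: "\<forall>x. (F has_derivative (\<lambda>h. h \<bullet> G x)) (at x)"
    and sc: "strongly_convex \<beta> F"
    and lip: "\<forall>x y. norm (G x - G y) \<le> L * norm (x - y)"
  shows "(L + \<beta>) * ((G x - G y) \<bullet> (x - y)) \<ge> (norm (G x - G y))\<^sup>2 + \<beta> * L * (norm (x - y))\<^sup>2"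
proof -
  have bl: "\<beta> \<le> L" by (rule beta_le_L[OF grad sc lip])
  define h where "h = G x - G y"
  define u where "u = x - y"
  have main: "(L + \<beta> + e) * (h \<bullet> u) \<ge> (norm h)\<^sup>2 + \<beta> * (L + e) * (norm u)\<^sup>2" if e: "e > 0" for e
  proof -
    define \<phi> where "\<phi> z = F z - \<beta> / 2 * (norm z)\<^sup>2" for z
    define D where "D z = G z - \<beta> *\<^sub>R z" for z
    define l where "l = L - \<beta> + e"
    have l: "l > 0" using bl e unfolding l_def by simp
    have idn: "\<phi> b - \<phi> a - D a \<bullet> (b - a) = F b - F a - G a \<bullet> (b - a) - \<beta> / 2 * (norm (b - a))\<^sup>2" for a b
      unfolding \<phi>_def D_def norm_sq_expand[of b a] by (simp add: inner_diff_left algebra_simps)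
    have lower: "\<forall>a b. \<phi> b \<ge> \<phi> a + D a \<bullet> (b - a)"
      using sc_lower[OF grad sc] idn by (smt (verit))
    have upper: "\<forall>a b. \<phi> b \<le> \<phi> a + D a \<bullet> (b - a) + l / 2 * (norm (b - a))\<^sup>2"
    proof (intro allI)
      fix a b
      have "F b \<le> F a + G a \<bullet> (b - a) + L / 2 * (norm (b - a))\<^sup>2" by (rule descent[OF grad lip])
      moreover have "(L - \<beta>) / 2 * (norm (b - a))\<^sup>2 \<le> l / 2 * (norm (b - a))\<^sup>2"
        unfolding l_def using e by (intro mult_right_mono) auto
      ultimately show "\<phi> b \<le> \<phi> a + D a \<bullet> (b - a) + l / 2 * (norm (b - a))\<^sup>2"
        using idn[of b a] by (simp add: algebra_simps)
    qed
    have cc: "l * ((D x - D y) \<bullet> (x - y)) \<ge> (norm (D x - D y))\<^sup>2"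
      by (rule cocoercive[OF lower upper l])
    have "D x - D y = h - \<beta> *\<^sub>R u" unfolding D_def h_def u_def by (simp add: algebra_simps)
    then have cc': "l * (h \<bullet> u - \<beta> * (u \<bullet> u)) \<ge> (h - \<beta> *\<^sub>R u) \<bullet> (h - \<beta> *\<^sub>R u)"
      using cc by (simp add: power2_norm_eq_inner u_def inner_diff_left)
    have "(h - \<beta> *\<^sub>R u) \<bullet> (h - \<beta> *\<^sub>R u) = h \<bullet> h - 2 * \<beta> * (h \<bullet> u) + \<beta>\<^sup>2 * (u \<bullet> u)"
      by (simp add: inner_diff_left inner_diff_right inner_commute power2_eq_square algebra_simps)
    moreover have "u \<bullet> h = h \<bullet> u" by (rule inner_commute)
    ultimately have "(l + 2 * \<beta>) * (h \<bullet> u) \<ge> h \<bullet> h + \<beta> * (l + \<beta>) * (u \<bullet> u)"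
      using cc' by (simp add: algebra_simps power2_eq_square)
    then show ?thesis unfolding l_def by (simp add: power2_norm_eq_inner algebra_simps)
  qed
  define A where "A = (L + \<beta>) * (h \<bullet> u) - ((norm h)\<^sup>2 + \<beta> * L * (norm u)\<^sup>2)"
  define K where "K = \<beta> * (norm u)\<^sup>2 - h \<bullet> u"
  have m: "A \<ge> e * K" if "e > 0" for e
    using main[OF that] unfolding A_def K_def by (simp add: algebra_simps)
  have "A \<ge> 0"
  proof (rule ccontr)
    assume "\<not> A \<ge> 0"
    then have A: "A < 0" by simp
    define e where "e = - A / (2 * \<bar>K\<bar> + 1)"
    have d: "2 * \<bar>K\<bar> + 1 > 0" by simp
    have e: "e > 0" using A d unfolding e_def by (simp add: divide_neg_pos)
    have "e * K \<ge> - (e * \<bar>K\<bar>)" using e by (metis abs_ge_minus_self abs_mult abs_of_pos minus_le_iff)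
    moreover have "e * \<bar>K\<bar> * (2 * \<bar>K\<bar> + 1) = - A * \<bar>K\<bar>" unfolding e_def using d by simp
    moreover have "- A * \<bar>K\<bar> < - A * (2 * \<bar>K\<bar> + 1)" using A by (simp add: mult_strict_left_mono)
    ultimately have "e * \<bar>K\<bar> < - A" using d
      by (metis mult_less_cancel_right_pos)
    then show False using m[OF e] \<open>e * K \<ge> - (e * \<bar>K\<bar>)\<close> by simp
  qed
  then show ?thesis unfolding A_def h_def u_def by simp
qed

lemma gd_contract:
  fixes F :: "'a::euclidean_space \<Rightarrow> real"
  assumes grad: "\<forall>x. (F has_derivative (\<lambda>h. h \<bullet> G x)) (at x)"
    and sc: "strongly_convex \<beta> F"
    and lip: "\<forall>x y. norm (G x - G y) \<le> L * norm (x - y)"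
    and b: "\<beta> > 0" and Gw: "G w = 0"
    and a: "\<alpha> > 0" "\<alpha> \<le> 2 / (L + \<beta>)"
  shows "norm (x - \<alpha> *\<^sub>R G x - w) \<le> (1 - \<alpha> * (\<beta> * L / (\<beta> + L))) * norm (x - w)"
proof -
  have bl: "\<beta> \<le> L" by (rule beta_le_L[OF grad sc lip])
  define \<gamma> where "\<gamma> = \<beta> * L / (\<beta> + L)"
  define h where "h = G x"
  define u where "u = x - w"
  have cc: "(L + \<beta>) * (h \<bullet> u) \<ge> h \<bullet> h + \<beta> * L * (u \<bullet> u)"
    using sc_cocoercive[OF grad sc lip, of x w] Gw unfolding h_def u_def
    by (simp add: power2_norm_eq_inner)
  have LB: "L + \<beta> > 0" using b bl by simp
  have hu: "h \<bullet> u \<ge> (h \<bullet> h) / (L + \<beta>) + \<gamma> * (u \<bullet> u)"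
  proof -
    have "(h \<bullet> h + \<beta> * L * (u \<bullet> u)) / (L + \<beta>) \<le> h \<bullet> u"
      using cc LB by (simp add: pos_divide_le_eq mult.commute)
    moreover have "(h \<bullet> h + \<beta> * L * (u \<bullet> u)) / (L + \<beta>) = (h \<bullet> h) / (L + \<beta>) + \<gamma> * (u \<bullet> u)"
      unfolding \<gamma>_def by (simp add: add_divide_distrib add.commute)
    ultimately show ?thesis by simp
  qed
  have "(norm (u - \<alpha> *\<^sub>R h))\<^sup>2 = (u - \<alpha> *\<^sub>R h) \<bullet> (u - \<alpha> *\<^sub>R h)" by (rule power2_norm_eq_inner)
  also have "\<dots> = u \<bullet> u - 2 * \<alpha> * (h \<bullet> u) + \<alpha>\<^sup>2 * (h \<bullet> h)"
    by (simp add: inner_diff_left inner_diff_right inner_commute power2_eq_square algebra_simps)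
  also have "\<dots> \<le> u \<bullet> u - 2 * \<alpha> * ((h \<bullet> h) / (L + \<beta>) + \<gamma> * (u \<bullet> u)) + \<alpha>\<^sup>2 * (h \<bullet> h)"
    using hu a by simp
  also have "\<dots> = (1 - 2 * \<alpha> * \<gamma>) * (u \<bullet> u) + \<alpha> * (\<alpha> - 2 / (L + \<beta>)) * (h \<bullet> h)"
    by (simp add: power2_eq_square algebra_simps)
  also have "\<dots> \<le> (1 - 2 * \<alpha> * \<gamma>) * (u \<bullet> u)"
  proof -
    have "\<alpha> * (\<alpha> - 2 / (L + \<beta>)) * (h \<bullet> h) \<le> 0"
      using a by (intro mult_nonpos_nonneg mult_nonneg_nonpos) auto
    then show ?thesis by simp
  qed
  also have "\<dots> \<le> (1 - \<alpha> * \<gamma>)\<^sup>2 * (u \<bullet> u)"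
    using a by (intro mult_right_mono) (auto simp: power2_eq_square algebra_simps)
  finally have sq: "(norm (u - \<alpha> *\<^sub>R h))\<^sup>2 \<le> ((1 - \<alpha> * \<gamma>) * norm u)\<^sup>2"
    by (simp add: power2_norm_eq_inner power_mult_distrib)
  have g0: "\<alpha> * \<gamma> \<le> 1"
  proof -
    have "\<gamma> \<le> (L + \<beta>) / 2"
    proof -
      have "\<beta> * L \<le> (\<beta> + L) * (\<beta> + L) / 2" by (simp add: algebra_simps)
      then show ?thesis unfolding \<gamma>_def using LB by (simp add: divide_le_eq algebra_simps)
    qed
    moreover have "\<gamma> \<ge> 0" unfolding \<gamma>_def using b bl by simp
    ultimately have "\<alpha> * \<gamma> \<le> (2 / (L + \<beta>)) * ((L + \<beta>) / 2)"
      using a by (intro mult_mono) auto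
    moreover have "(2 / (L + \<beta>)) * ((L + \<beta>) / 2) = 1" using LB by simp
    ultimately show ?thesis by (metis order_trans order_refl)
  qed
  have "0 \<le> (1 - \<alpha> * \<gamma>) * norm u" using g0 by simp
  then have "norm (u - \<alpha> *\<^sub>R h) \<le> (1 - \<alpha> * \<gamma>) * norm u"
    by (rule power2_le_imp_le[OF sq])
  moreover have "u - \<alpha> *\<^sub>R h = x - \<alpha> *\<^sub>R G x - w" unfolding u_def h_def by simp
  ultimately have "norm (x - \<alpha> *\<^sub>R G x - w) \<le> (1 - \<alpha> * \<gamma>) * norm (x - w)"
    unfolding u_def by metis
  then show ?thesis unfolding \<gamma>_def .
qed




locale ps =
  fixes n :: nat and E :: "(nat \<times> nat) set" and y :: "nat \<Rightarrow> nat \<Rightarrow> real"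
  assumes n_pos: "n \<ge> 1"
    and E_sub: "E \<subseteq> {..<n} \<times> {..<n}"
    and E_refl: "\<forall>i<n. (i, i) \<in> E"
    and E_strong: "\<forall>i<n. \<forall>j<n. (i, j) \<in> E\<^sup>*"
    and y0: "\<forall>i<n. y 0 i = 1"
    and y_step: "\<forall>t. \<forall>i<n. y (Suc t) i = (\<Sum>j<n. weight_mat E i j * y t j)"
begin

lemma out_set: "j < n \<Longrightarrow> {i. (j, i) \<in> E} = {i \<in> {..<n}. (j, i) \<in> E}"
  using E_sub by auto

lemma out_deg_bounds: assumes "j < n" shows "out_deg E j > 0" "out_deg E j \<le> n"
proof -
  have fin: "finite {i \<in> {..<n}. (j, i) \<in> E}" by simp
  have "j \<in> {i \<in> {..<n}. (j, i) \<in> E}" using assms E_refl by auto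
  then show "out_deg E j > 0" unfolding out_deg_def out_set[OF assms]
    using fin card_gt_0_iff by blast
  show "out_deg E j \<le> n" unfolding out_deg_def out_set[OF assms]
    by (metis (no_types, lifting) card_lessThan card_mono finite_lessThan mem_Collect_eq subsetI)
qed

lemma W_nonneg: "weight_mat E i j \<ge> 0"
  unfolding weight_mat_def by simp

lemma W_lb: assumes "(j, i) \<in> E" shows "weight_mat E i j \<ge> 1 / real n"
proof -
  have j: "j < n" using assms E_sub by auto
  have "real (out_deg E j) \<le> real n" "real (out_deg E j) > 0" using out_deg_bounds[OF j] by auto
  then show ?thesis unfolding weight_mat_def using assms by (simp add: frac_le)
qed

lemma W_colsum: assumes "j < n" shows "(\<Sum>i<n. weight_mat E i j) = 1"
proof -
  have "(\<Sum>i<n. weight_mat E i j) = (\<Sum>i\<in>{i \<in> {..<n}. (j, i) \<in> E}. 1 / real (out_deg E j))"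
    unfolding weight_mat_def by (subst sum.inter_filter) auto
  also have "\<dots> = real (card {i \<in> {..<n}. (j, i) \<in> E}) / real (out_deg E j)" by simp
  also have "\<dots> = 1"
  proof -
    have "card {i \<in> {..<n}. (j, i) \<in> E} = out_deg E j" unfolding out_deg_def out_set[OF assms] ..
    then show ?thesis using out_deg_bounds(1)[OF assms] by simp
  qed
  finally show ?thesis .
qed

lemma y_nonneg: "i < n \<Longrightarrow> y t i \<ge> 0"
proof (induction t arbitrary: i)
  case 0 then show ?case using y0 by simp
next
  case (Suc t)
  have "0 \<le> (\<Sum>j<n. weight_mat E i j * y t j)"
    using Suc W_nonneg by (intro sum_nonneg) auto
  then show ?case using y_step Suc.prems by simp
qed

lemma y_sum: "(\<Sum>i<n. y t i) = real n"
proof (induction t)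
  case 0 then show ?case using y0 by simp
next
  case (Suc t)
  have "(\<Sum>i<n. y (Suc t) i) = (\<Sum>i<n. \<Sum>j<n. weight_mat E i j * y t j)" using y_step by simp
  also have "\<dots> = (\<Sum>j<n. (\<Sum>i<n. weight_mat E i j) * y t j)"
    by (subst sum.swap) (simp add: sum_distrib_right)
  also have "\<dots> = (\<Sum>j<n. y t j)" using W_colsum by simp
  finally show ?case using Suc by simp
qed

lemma y_step_ge: assumes "i < n" "j < n" shows "y (Suc t) i \<ge> weight_mat E i j * y t j"
proof -
  have "weight_mat E i j * y t j \<le> (\<Sum>k<n. weight_mat E i k * y t k)"
    using assms by (intro member_le_sum) (auto intro: mult_nonneg_nonneg W_nonneg y_nonneg)
  then show ?thesis using y_step assms by simp
qed

lemma y_path: "(j, i) \<in> E ^^ k \<Longrightarrow> i < n \<Longrightarrow> j < n \<Longrightarrow> y (t + k) i \<ge> (1 / real n) ^ k * y t j"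
proof (induction k arbitrary: i)
  case 0 then show ?case by simp
next
  case (Suc k)
  from Suc.prems(1) obtain m where m: "(j, m) \<in> E ^^ k" "(m, i) \<in> E" by (rule relpow_Suc_E)
  have mn: "m < n" using m(2) E_sub by auto
  have "(1 / real n) ^ Suc k * y t j = (1 / real n) * ((1 / real n) ^ k * y t j)" by simp
  also have "\<dots> \<le> (1 / real n) * y (t + k) m"
    using Suc.IH[OF m(1) mn Suc.prems(3)] by (intro mult_left_mono) auto
  also have "\<dots> \<le> weight_mat E i m * y (t + k) m"
    using W_lb[OF m(2)] y_nonneg[OF mn] by (intro mult_right_mono) auto
  also have "\<dots> \<le> y (Suc (t + k)) i" by (rule y_step_ge[OF Suc.prems(2) mn])
  finally show ?case by simp
qed

lemma refl_pow: "i < n \<Longrightarrow> (i, i) \<in> E ^^ k"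
  by (induction k) (auto intro: relpow_Suc_I E_refl[rule_format])

lemma pad: assumes "(j, i) \<in> E ^^ k" "k \<le> K" "i < n" shows "(j, i) \<in> E ^^ K"
proof -
  have "(i, i) \<in> E ^^ (K - k)" by (rule refl_pow[OF assms(3)])
  then have "(j, i) \<in> E ^^ k O E ^^ (K - k)" using assms(1) by auto
  then show ?thesis using assms(2) by (metis relpow_add le_add_diff_inverse)
qed

lemma y_lower: "\<exists>c>0. \<forall>t i. i < n \<longrightarrow> y t i \<ge> c"
proof -
  have "\<forall>ij\<in>{..<n} \<times> {..<n}. \<exists>k. (snd ij, fst ij) \<in> E ^^ k"
    using E_strong by (auto simp: rtrancl_power)
  then obtain kf where kf: "\<forall>ij\<in>{..<n} \<times> {..<n}. (snd ij, fst ij) \<in> E ^^ kf ij" by metis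
  define K where "K = Max (kf ` ({..<n} \<times> {..<n}))"
  have path: "(j, i) \<in> E ^^ K" if "i < n" "j < n" for i j
  proof -
    have "kf (i, j) \<le> K" unfolding K_def using that by (intro Max_ge) auto
    then show ?thesis using kf that pad by fastforce
  qed
  define c where "c = (1 / real n) ^ K"
  have c: "c > 0" unfolding c_def using n_pos by simp
  have "y t i \<ge> c" if i: "i < n" for t i
  proof (cases "t \<ge> K")
    case True
    have "\<exists>j<n. y (t - K) j \<ge> 1"
    proof (rule ccontr)
      assume "\<not> ?thesis"
      then have "\<forall>j<n. y (t - K) j < 1" by auto
      then have "(\<Sum>j<n. y (t - K) j) < (\<Sum>j<(n::nat). 1)" using n_pos by (intro sum_strict_mono) (auto simp: lessThan_empty_iff)
      then show False using y_sum by simp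
    qed
    then obtain j where jn: "j < n" and jy: "y (t - K) j \<ge> 1" by auto
    have "y (t - K + K) i \<ge> (1 / real n) ^ K * y (t - K) j" by (rule y_path[OF path[OF i jn] i jn])
    moreover have "(1 / real n) ^ K * y (t - K) j \<ge> c * 1" unfolding c_def using jy c c_def
      by (intro mult_left_mono) auto
    ultimately show ?thesis using True by simp
  next
    case False
    have "y (0 + t) i \<ge> (1 / real n) ^ t * y 0 i" by (rule y_path[OF refl_pow[OF i] i i])
    moreover have "(1 / real n) ^ t \<ge> c" unfolding c_def using False n_pos
      by (intro power_decreasing) auto
    ultimately show ?thesis using y0 i by simp
  qed
  then show ?thesis using c by blast
qed

lemma delta_facts:
  defines "\<delta> \<equiv> Sup {1 / y t i | t i. i < n}"
  shows "\<forall>t i. i < n \<longrightarrow> y t i > 0 \<and> 1 / y t i \<le> \<delta>" "\<delta> \<ge> 1"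
proof -
  obtain c where c: "c > 0" "\<forall>t i. i < n \<longrightarrow> y t i \<ge> c" using y_lower by blast
  have bdd: "bdd_above {1 / y t i | t i. i < n}"
  proof (rule bdd_aboveI[of _ "1 / c"])
    fix r assume "r \<in> {1 / y t i | t i. i < n}"
    then obtain t i where "r = 1 / y t i" "i < n" by auto
    then show "r \<le> 1 / c" using c by (simp add: frac_le)
  qed
  show "\<forall>t i. i < n \<longrightarrow> y t i > 0 \<and> 1 / y t i \<le> \<delta>"
  proof (intro allI impI conjI)
    fix t i assume "i < n"
    then show "y t i > 0" using c by (meson less_le_trans)
    show "1 / y t i \<le> \<delta>" unfolding \<delta>_def using \<open>i < n\<close> by (intro cSup_upper[OF _ bdd]) auto
  qed
  have "1 / y 0 0 \<in> {1 / y t i | t i. i < n}" by (rule CollectI, rule exI[of _ 0], rule exI[of _ 0]) (use n_pos in simp)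
  then have "1 / y 0 0 \<le> \<delta>" unfolding \<delta>_def by (intro cSup_upper[OF _ bdd])
  then show "\<delta> \<ge> 1" using y0 n_pos by simp
qed

end



lemma unroll_e:
  fixes e :: "nat \<Rightarrow> real"
  assumes rec: "\<forall>t. e (Suc t) \<le> r * e t + D" and r: "0 \<le> r" "r < 1" and D: "D \<ge> 0"
  shows "e t \<le> r ^ t * e 0 + D / (1 - r)"
proof (induction t)
  case 0
  show ?case using r D by simp
next
  case (Suc t)
  have "e (Suc t) \<le> r * e t + D" using rec by simp
  also have "\<dots> \<le> r * (r ^ t * e 0 + D / (1 - r)) + D" using Suc r by (intro add_right_mono mult_left_mono) auto
  also have "\<dots> = r ^ Suc t * e 0 + D / (1 - r)" using r by (simp add: field_simps)
  finally show ?case .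
qed

lemma tm_step:
  fixes q r :: real
  assumes "0 \<le> q" "0 \<le> r"
  shows "q * (real t * (max q r) ^ (t - 1)) + r ^ t \<le> real (Suc t) * (max q r) ^ (Suc t - 1)"
proof -
  let ?m = "max q r"
  have "q * (real t * ?m ^ (t - 1)) \<le> real t * ?m ^ t"
  proof (cases t)
    case 0 then show ?thesis by simp
  next
    case (Suc k)
    have "q * ?m ^ k \<le> ?m * ?m ^ k" using assms by (intro mult_right_mono) auto
    then have "real t * (q * ?m ^ k) \<le> real t * (?m * ?m ^ k)" by (rule mult_left_mono) simp
    then show ?thesis using Suc by (simp add: mult.left_commute)
  qed
  moreover have "r ^ t \<le> ?m ^ t" using assms by (intro power_mono) auto
  ultimately show ?thesis by (simp add: algebra_simps)
qed

lemma unroll_a: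
  fixes a e :: "nat \<Rightarrow> real"
  assumes rec: "\<forall>t. a (Suc t) \<le> q * a t + K * (e t + s ^ t * C)"
    and eb: "\<forall>t. e t \<le> r ^ t * e0 + B"
    and q: "0 \<le> q" "q < 1" and r: "0 \<le> r" and s: "0 \<le> s" and K: "K \<ge> 0" and C: "C \<ge> 0" and e0: "e0 \<ge> 0" and B: "B \<ge> 0"
  shows "a t \<le> q ^ t * a 0 + K * e0 * real t * (max q r) ^ (t - 1)
                + K * C * real t * (max q s) ^ (t - 1) + K * B / (1 - q)"
proof (induction t)
  case 0
  show ?case using q K B by simp
next
  case (Suc t)
  let ?m1 = "max q r" and ?m2 = "max q s"
  have "a (Suc t) \<le> q * a t + K * (e t + s ^ t * C)" using rec by simp
  also have "\<dots> \<le> q * (q ^ t * a 0 + K * e0 * real t * ?m1 ^ (t - 1)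
                + K * C * real t * ?m2 ^ (t - 1) + K * B / (1 - q)) + K * (r ^ t * e0 + B + s ^ t * C)"
    using Suc eb[rule_format, of t] q K s by (intro add_mono mult_left_mono) auto
  also have "\<dots> = q ^ Suc t * a 0 + K * e0 * (q * (real t * ?m1 ^ (t - 1)) + r ^ t)
                + K * C * (q * (real t * ?m2 ^ (t - 1)) + s ^ t) + K * B / (1 - q)"
    using q by (simp add: field_simps)
  also have "\<dots> \<le> q ^ Suc t * a 0 + K * e0 * (real (Suc t) * ?m1 ^ (Suc t - 1))
                + K * C * (real (Suc t) * ?m2 ^ (Suc t - 1)) + K * B / (1 - q)"
    using tm_step[OF q(1) r, of t] tm_step[OF q(1) s, of t] K e0 C
    by (intro add_mono mult_left_mono order_refl) auto
  finally show ?case by (simp add: mult.assoc)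
qed

lemma alpha_gamma:
  fixes \<alpha> \<beta> L :: real
  assumes "\<beta> > 0" "L > 0" "\<alpha> > 0" "\<alpha> \<le> 2 / (L + \<beta>)"
  shows "\<beta> * L / (\<beta> + L) * \<alpha> \<le> 1" "\<beta> * L / (\<beta> + L) * \<alpha> > 0"
proof -
  have LB: "L + \<beta> > 0" using assms by simp
  have "\<beta> * L / (\<beta> + L) \<le> (L + \<beta>) / 2"
  proof -
    have "\<beta> * L \<le> (\<beta> + L) * (\<beta> + L) / 2" by (simp add: algebra_simps)
    then show ?thesis using LB by (simp add: divide_le_eq algebra_simps)
  qed
  moreover have "\<beta> * L / (\<beta> + L) \<ge> 0" using assms by simp
  ultimately have "\<beta> * L / (\<beta> + L) * \<alpha> \<le> ((L + \<beta>) / 2) * (2 / (L + \<beta>))"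
    using assms by (intro mult_mono) auto
  moreover have "((L + \<beta>) / 2) * (2 / (L + \<beta>)) = 1" using LB by simp
  ultimately show "\<beta> * L / (\<beta> + L) * \<alpha> \<le> 1" by (metis order_trans order_refl)
  show "\<beta> * L / (\<beta> + L) * \<alpha> > 0" using assms by simp
qed


theorem theorem4p3:
  fixes n :: nat and E :: "(nat \<times> nat) set" and p :: "nat \<Rightarrow> real"
    and f :: "nat \<Rightarrow> 'a::euclidean_space \<Rightarrow> real" and g :: "nat \<Rightarrow> 'a \<Rightarrow> 'a"
    and Li :: "nat \<Rightarrow> real" and L \<beta> \<alpha> R :: real and wstar :: 'a
    and w :: "nat \<Rightarrow> nat \<Rightarrow> 'a" and y :: "nat \<Rightarrow> nat \<Rightarrow> real"
  defines "\<sigma> \<equiv> pi_op_norm n p (\<lambda>i j. weight_mat E i j - p i)"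
    and "F \<equiv> (\<lambda>x. (1 / real n) * (\<Sum>i<n. f i x))"
    and "\<gamma> \<equiv> \<beta> * L / (\<beta> + L)"
    and "wbar \<equiv> (\<lambda>t. (1 / real n) *\<^sub>R (\<Sum>i<n. w t i))"
    and "\<delta> \<equiv> Sup {1 / y t i | t i. i < n}"
  assumes n_pos: "n \<ge> 1"
    and E_sub: "E \<subseteq> {..<n} \<times> {..<n}"
    and E_refl: "\<forall>i<n. (i, i) \<in> E"
    and E_strong: "\<forall>i<n. \<forall>j<n. (i, j) \<in> E\<^sup>*"
    and p_fix: "mat_vec n (weight_mat E) p = p" and p_pos: "\<forall>i<n. p i > 0" and p_sum: "(\<Sum>i<n. p i) = 1"
    and grad: "\<forall>i<n. \<forall>x. GDERIV (f i) x :> g i x"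
    and F1: "\<forall>i<n. Li i > 0 \<and> (Li i)-lipschitz_on UNIV (g i)"
    and L_def: "L = Max (Li ` {..<n})"
    and F2: "\<beta> > 0" "strongly_convex \<beta> F"
    and wstar_min: "\<forall>x. F wstar \<le> F x"
    and alpha_pos: "\<alpha> > 0"
    and y0: "\<forall>i<n. y 0 i = 1"
    and w_step: "\<forall>t. \<forall>i<n. w (Suc t) i =
        (\<Sum>j<n. weight_mat E i j *\<^sub>R (w t j - \<alpha> *\<^sub>R g j ((1 / y t j) *\<^sub>R w t j)))"
    and y_step: "\<forall>t. \<forall>i<n. y (Suc t) i = (\<Sum>j<n. weight_mat E i j * y t j)"
    and alpha_le: "\<alpha> \<le> 2 / (L + \<beta>)"
    and rho_lt: "\<sigma> * (1 + \<alpha> * L * \<delta>) < 1"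
    and R_pos: "R > 0"
    and R_bound: "\<forall>t. norm (wbar t - wstar) \<le> R"
  shows "let \<rho> = \<sigma> * (1 + \<alpha> * L * \<delta>);
             c = pi_norm n p (\<lambda>i. 1 - real n * p i);
             D1 = \<delta> * c + sqrt (\<Sum>j<n. 1 / p j);
             D2 = L * \<delta> * c * norm wstar + pi_block_norm n p (\<lambda>i. g i wstar);
             Rb = L * D1 * R + D2;
             e = (\<lambda>t. pi_block_norm n p (\<lambda>i. w t i - (real n * p i) *\<^sub>R wbar t))
         in \<forall>t::nat.
            e t \<le> \<rho> ^ t * e 0 + \<alpha> * \<sigma> * Rb / (1 - \<rho>)
          \<and> norm (wbar t - wstar) \<le>
              (1 - \<gamma> * \<alpha>) ^ t * norm (wbar 0 - wstar)
              + \<alpha> * L * \<delta> / real n * e 0 * real t * (max (1 - \<gamma> * \<alpha>) \<rho>) ^ (t - 1)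
              + \<alpha> * L * \<delta> / real n * c * (norm wstar + R) * real t * (max (1 - \<gamma> * \<alpha>) \<sigma>) ^ (t - 1)
              + \<alpha> * L * \<delta> / (real n * \<gamma>) * (\<sigma> * Rb / (1 - \<rho>))"
proof -
  interpret ps n E y by unfold_locales (use n_pos E_sub E_refl E_strong y0 y_step in auto)
  have df: "\<forall>t i. i < n \<longrightarrow> y t i > 0 \<and> 1 / y t i \<le> \<delta>" "\<delta> \<ge> 1"
    using delta_facts unfolding \<delta>_def by auto
  have ypos: "\<And>t i. i < n \<Longrightarrow> y t i > 0" and ydel: "\<And>t i. i < n \<Longrightarrow> 1 / y t i \<le> \<delta>"
    using df(1) by auto
  define W where "W = weight_mat E"
  define Wi where "Wi = (\<lambda>i j. W i j - p i)"
  have \<sigma>_eq: "\<sigma> = pi_op_norm n p Wi" unfolding \<sigma>_def Wi_def W_def ..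
  have \<sigma>0: "\<sigma> \<ge> 0" unfolding \<sigma>_eq by (rule op_nonneg[OF p_pos p_sum])
  have Li_le: "\<And>i. i < n \<Longrightarrow> Li i \<le> L" unfolding L_def by (intro Max_ge) auto
  have Lpos: "L > 0" using Li_le[of 0] F1 n_pos by fastforce
  have Lip: "\<And>i a b. i < n \<Longrightarrow> norm (g i a - g i b) \<le> L * norm (a - b)"
  proof -
    fix i a b assume i: "i < n"
    have "dist (g i a) (g i b) \<le> Li i * dist a b"
      using F1 i by (intro lipschitz_onD) auto
    also have "\<dots> \<le> L * dist a b" using Li_le[OF i] by (intro mult_right_mono) auto
    finally show "norm (g i a - g i b) \<le> L * norm (a - b)" by (simp add: dist_norm)
  qed
  define \<rho> where "\<rho> = \<sigma> * (1 + \<alpha> * L * \<delta>)"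
  have \<rho>0: "\<rho> \<ge> 0" unfolding \<rho>_def using \<sigma>0 alpha_pos Lpos df(2) by simp
  have \<rho>1: "\<rho> < 1" unfolding \<rho>_def using rho_lt .
  have \<sigma>1: "\<sigma> < 1"
  proof -
    have "\<sigma> * 1 \<le> \<sigma> * (1 + \<alpha> * L * \<delta>)" using \<sigma>0 alpha_pos Lpos df(2) by (intro mult_left_mono) auto
    then show ?thesis using rho_lt by simp
  qed
  define G where "G x = (1 / real n) *\<^sub>R (\<Sum>i<n. g i x)" for x
  have gradF: "\<forall>x. (F has_derivative (\<lambda>h. h \<bullet> G x)) (at x)"
  proof
    fix x
    have "\<And>i. i \<in> {..<n} \<Longrightarrow> (f i has_derivative (\<lambda>h. h \<bullet> g i x)) (at x)"
      using grad unfolding gderiv_def by auto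
    then have "((\<lambda>x. \<Sum>i<n. f i x) has_derivative (\<lambda>h. \<Sum>i<n. h \<bullet> g i x)) (at x)"
      by (rule has_derivative_sum)
    then have "((\<lambda>x. (1 / real n) * (\<Sum>i<n. f i x)) has_derivative (\<lambda>h. (1 / real n) * (\<Sum>i<n. h \<bullet> g i x))) (at x)"
      by (rule has_derivative_mult_right)
    moreover have "(\<lambda>h. (1 / real n) * (\<Sum>i<n. h \<bullet> g i x)) = (\<lambda>h. h \<bullet> G x)"
      by (simp add: G_def inner_sum_right)
    ultimately show "(F has_derivative (\<lambda>h. h \<bullet> G x)) (at x)" unfolding F_def by simp
  qed
  have lipG: "\<forall>a b. norm (G a - G b) \<le> L * norm (a - b)"
  proof (intro allI)
    fix a b
    have "G a - G b = (1 / real n) *\<^sub>R (\<Sum>i<n. g i a - g i b)"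
      unfolding G_def by (simp add: sum_subtractf scaleR_diff_right)
    then have "norm (G a - G b) = (1 / real n) * norm (\<Sum>i<n. g i a - g i b)" by simp
    also have "\<dots> \<le> (1 / real n) * (\<Sum>i<n. L * norm (a - b))"
      by (intro mult_left_mono order_trans[OF norm_sum] sum_mono Lip) auto
    also have "\<dots> = L * norm (a - b)" using n_pos by simp
    finally show "norm (G a - G b) \<le> L * norm (a - b)" .
  qed
  have Gw: "G wstar = 0"
  proof -
    have "(\<lambda>h. h \<bullet> G wstar) = (\<lambda>v. 0)"
      by (rule differential_zero_maxmin[of wstar UNIV F]) (use gradF wstar_min in auto)
    then have "G wstar \<bullet> G wstar = 0" by metis
    then show ?thesis by simp
  qed
  have contr: "\<And>x. norm (x - \<alpha> *\<^sub>R G x - wstar) \<le> (1 - \<alpha> * \<gamma>) * norm (x - wstar)"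
    using gd_contract[OF gradF F2(2) lipG F2(1) Gw alpha_pos alpha_le] unfolding \<gamma>_def by blast
  have ag: "\<gamma> * \<alpha> \<le> 1" "\<gamma> * \<alpha> > 0" unfolding \<gamma>_def using alpha_gamma[OF F2(1) Lpos alpha_pos alpha_le] by auto
  have Wp: "\<And>i. i < n \<Longrightarrow> (\<Sum>j<n. W i j * p j) = p i"
    using fun_cong[OF p_fix] unfolding mat_vec_def W_def by auto
  have colsum: "\<And>j. j < n \<Longrightarrow> (\<Sum>i<n. W i j) = 1" unfolding W_def by (rule W_colsum)
  define c where "c = pi_norm n p (\<lambda>i. 1 - real n * p i)"
  have c0: "c \<ge> 0" unfolding c_def by (rule pi_norm_nonneg'[OF p_pos])
  have ydev: "pi_norm n p (\<lambda>i. y t i - real n * p i) \<le> \<sigma> ^ t * c" for t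
  proof (induction t)
    case 0
    have "pi_norm n p (\<lambda>i. y 0 i - real n * p i) = c"
      unfolding c_def using y0 by (intro pi_norm_cong) auto
    then show ?case by simp
  next
    case (Suc t)
    have eq: "\<forall>i<n. y (Suc t) i - real n * p i = mat_vec n Wi (\<lambda>j. y t j - real n * p j) i"
    proof (intro allI impI)
      fix i assume i: "i < n"
      have "mat_vec n Wi (\<lambda>j. y t j - real n * p j) i
          = (\<Sum>j<n. W i j * y t j) - real n * (\<Sum>j<n. W i j * p j) - p i * (\<Sum>j<n. y t j) + real n * p i * (\<Sum>j<n. p j)"
        unfolding mat_vec_def Wi_def
        by (simp add: algebra_simps sum_subtractf sum.distrib sum_distrib_left)
      also have "\<dots> = y (Suc t) i - real n * p i"
        using Wp[OF i] y_sum p_sum y_step i unfolding W_def by simp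
      finally show "y (Suc t) i - real n * p i = mat_vec n Wi (\<lambda>j. y t j - real n * p j) i" by simp
    qed
    have "pi_norm n p (\<lambda>i. y (Suc t) i - real n * p i) = pi_norm n p (mat_vec n Wi (\<lambda>j. y t j - real n * p j))"
      by (rule pi_norm_cong[OF eq])
    also have "\<dots> \<le> \<sigma> * pi_norm n p (\<lambda>j. y t j - real n * p j)"
      unfolding \<sigma>_eq by (rule op_bound[OF p_pos p_sum])
    also have "\<dots> \<le> \<sigma> * (\<sigma> ^ t * c)" using Suc \<sigma>0 by (intro mult_left_mono) auto
    finally show ?case by simp
  qed
  have ydev': "pi_norm n p (\<lambda>i. y t i - real n * p i) \<le> c" for t
  proof -
    have "\<sigma> ^ t * c \<le> 1 * c" using \<sigma>0 \<sigma>1 c0 by (intro mult_right_mono power_le_one) auto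
    then show ?thesis using ydev[of t] by simp
  qed
  define z where "z t j = (1 / y t j) *\<^sub>R w t j" for t j
  define xv where "xv t j = w t j - \<alpha> *\<^sub>R g j (z t j)" for t j
  have wS: "w (Suc t) i = (\<Sum>j<n. W i j *\<^sub>R xv t j)" if "i < n" for t i
    using w_step that unfolding W_def xv_def z_def by simp
  have wsum: "wbar (Suc t) = (1 / real n) *\<^sub>R (\<Sum>j<n. xv t j)" for t
  proof -
    have "(\<Sum>i<n. w (Suc t) i) = (\<Sum>i<n. \<Sum>j<n. W i j *\<^sub>R xv t j)" using wS by simp
    also have "\<dots> = (\<Sum>j<n. (\<Sum>i<n. W i j) *\<^sub>R xv t j)"
      by (subst sum.swap) (simp add: scaleR_sum_left)
    also have "\<dots> = (\<Sum>j<n. xv t j)" using colsum by simp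
    finally show ?thesis unfolding wbar_def by simp
  qed
  have wbar_step: "wbar (Suc t) = wbar t - (\<alpha> / real n) *\<^sub>R (\<Sum>j<n. g j (z t j))" for t
  proof -
    have "(\<Sum>j<n. xv t j) = (\<Sum>j<n. w t j) - \<alpha> *\<^sub>R (\<Sum>j<n. g j (z t j))"
      unfolding xv_def by (simp add: sum_subtractf scaleR_sum_right)
    then have "wbar (Suc t) = (1 / real n) *\<^sub>R ((\<Sum>j<n. w t j) - \<alpha> *\<^sub>R (\<Sum>j<n. g j (z t j)))"
      using wsum[of t] by simp
    also have "\<dots> = wbar t - (\<alpha> / real n) *\<^sub>R (\<Sum>j<n. g j (z t j))"
      unfolding wbar_def by (simp add: scaleR_diff_right)
    finally show ?thesis .
  qed
  define e where "e t = pi_block_norm n p (\<lambda>i. w t i - (real n * p i) *\<^sub>R wbar t)" for t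
  have e0: "e t \<ge> 0" for t unfolding e_def blk_as_pi by (rule pi_norm_nonneg'[OF p_pos])
  have dev_step: "w (Suc t) i - (real n * p i) *\<^sub>R wbar (Suc t)
      = (\<Sum>j<n. Wi i j *\<^sub>R (xv t j - (real n * p j) *\<^sub>R wbar t))" if i: "i < n" for t i
  proof -
    let ?X = "\<Sum>j<n. xv t j"
    have nw: "real n *\<^sub>R wbar (Suc t) = ?X" using wsum[of t] n_pos by simp
    have trm: "Wi i j *\<^sub>R (xv t j - (real n * p j) *\<^sub>R wbar t)
        = W i j *\<^sub>R xv t j - p i *\<^sub>R xv t j - (W i j * (real n * p j)) *\<^sub>R wbar t
          + (p i * (real n * p j)) *\<^sub>R wbar t" for j
      unfolding Wi_def by (simp add: algebra_simps)
    have "(\<Sum>j<n. Wi i j *\<^sub>R (xv t j - (real n * p j) *\<^sub>R wbar t))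
        = (\<Sum>j<n. W i j *\<^sub>R xv t j) - (\<Sum>j<n. p i *\<^sub>R xv t j) - (\<Sum>j<n. (W i j * (real n * p j)) *\<^sub>R wbar t)
          + (\<Sum>j<n. (p i * (real n * p j)) *\<^sub>R wbar t)"
      unfolding trm by (simp add: sum.distrib sum_subtractf)
    also have "\<dots> = w (Suc t) i - p i *\<^sub>R ?X - (\<Sum>j<n. W i j * (real n * p j)) *\<^sub>R wbar t
          + (\<Sum>j<n. p i * (real n * p j)) *\<^sub>R wbar t"
      using wS[OF i, of t] by (simp add: scaleR_sum_left scaleR_sum_right)
    also have "(\<Sum>j<n. W i j * (real n * p j)) = real n * p i"
      using Wp[OF i] by (simp add: sum_distrib_left[symmetric] algebra_simps)
    also have "(\<Sum>j<n. p i * (real n * p j)) = real n * p i"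
    proof -
      have "(\<Sum>j<n. p i * (real n * p j)) = (p i * real n) * (\<Sum>j<n. p j)"
        by (simp add: sum_distrib_left mult.assoc)
      then show ?thesis using p_sum by simp
    qed
    finally show ?thesis unfolding nw[symmetric] by (simp add: algebra_simps)
  qed
  have e_step1: "e (Suc t) \<le> \<sigma> * pi_block_norm n p (\<lambda>j. xv t j - (real n * p j) *\<^sub>R wbar t)" for t
  proof -
    have "e (Suc t) = pi_block_norm n p (\<lambda>i. \<Sum>j<n. Wi i j *\<^sub>R (xv t j - (real n * p j) *\<^sub>R wbar t))"
      unfolding e_def blk_as_pi using dev_step by (intro pi_norm_cong) auto
    also have "\<dots> \<le> \<sigma> * pi_block_norm n p (\<lambda>j. xv t j - (real n * p j) *\<^sub>R wbar t)"
      unfolding \<sigma>_eq by (rule blk_op_bound[OF p_pos p_sum])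
    finally show ?thesis .
  qed
  have e_step2: "pi_block_norm n p (\<lambda>j. xv t j - (real n * p j) *\<^sub>R wbar t)
      \<le> e t + \<alpha> * pi_block_norm n p (\<lambda>j. g j (z t j))" for t
  proof -
    have "pi_block_norm n p (\<lambda>j. xv t j - (real n * p j) *\<^sub>R wbar t)
        \<le> pi_norm n p (\<lambda>j. norm (w t j - (real n * p j) *\<^sub>R wbar t) + \<alpha> * norm (g j (z t j)))"
      unfolding blk_as_pi
    proof (rule pi_norm_mono[OF p_pos], intro allI impI)
      fix j
      have eq: "xv t j - (real n * p j) *\<^sub>R wbar t = (w t j - (real n * p j) *\<^sub>R wbar t) - \<alpha> *\<^sub>R g j (z t j)"
        unfolding xv_def by (simp add: algebra_simps)
      show "\<bar>norm (xv t j - (real n * p j) *\<^sub>R wbar t)\<bar> \<le> norm (w t j - (real n * p j) *\<^sub>R wbar t) + \<alpha> * norm (g j (z t j))"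
        unfolding eq using norm_triangle_ineq4[of "w t j - (real n * p j) *\<^sub>R wbar t" "\<alpha> *\<^sub>R g j (z t j)"] alpha_pos by simp
    qed
    also have "\<dots> \<le> e t + \<alpha> * pi_block_norm n p (\<lambda>j. g j (z t j))"
      using pi_norm_tri[OF p_pos, of "\<lambda>j. norm (w t j - (real n * p j) *\<^sub>R wbar t)" "\<lambda>j. \<alpha> * norm (g j (z t j))"]
        pi_norm_scale[OF p_pos, of \<alpha> "\<lambda>j. norm (g j (z t j))"] alpha_pos
      unfolding e_def blk_as_pi by simp
    finally show ?thesis .
  qed
  have wbar_bd: "norm (wbar t) \<le> norm wstar + R" for t
    using R_bound norm_triangle_sub[of "wbar t" wstar] by (smt (verit, best))
  have zdev: "norm (z t j - wbar t) \<le> \<delta> * norm (w t j - (real n * p j) *\<^sub>R wbar t)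
      + \<delta> * (norm wstar + R) * \<bar>y t j - real n * p j\<bar>" if j: "j < n" for t j
  proof -
    have yp: "y t j > 0" by (rule ypos[OF j])
    have "z t j - wbar t = (1 / y t j) *\<^sub>R ((w t j - (real n * p j) *\<^sub>R wbar t) - (y t j - real n * p j) *\<^sub>R wbar t)"
      unfolding z_def using yp by (simp add: algebra_simps)
    then have "norm (z t j - wbar t) = (1 / y t j) * norm ((w t j - (real n * p j) *\<^sub>R wbar t) - (y t j - real n * p j) *\<^sub>R wbar t)"
      using yp by simp
    also have "\<dots> \<le> (1 / y t j) * (norm (w t j - (real n * p j) *\<^sub>R wbar t) + \<bar>y t j - real n * p j\<bar> * (norm wstar + R))"
    proof (rule mult_left_mono)
      show "0 \<le> 1 / y t j" using yp by simp
      have "norm ((w t j - (real n * p j) *\<^sub>R wbar t) - (y t j - real n * p j) *\<^sub>R wbar t)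
          \<le> norm (w t j - (real n * p j) *\<^sub>R wbar t) + \<bar>y t j - real n * p j\<bar> * norm (wbar t)"
        using norm_triangle_ineq4[of "w t j - (real n * p j) *\<^sub>R wbar t" "(y t j - real n * p j) *\<^sub>R wbar t"]
        by (simp only: norm_scaleR)
      also have "\<dots> \<le> norm (w t j - (real n * p j) *\<^sub>R wbar t) + \<bar>y t j - real n * p j\<bar> * (norm wstar + R)"
        using wbar_bd by (intro add_left_mono mult_left_mono) auto
      finally show "norm ((w t j - (real n * p j) *\<^sub>R wbar t) - (y t j - real n * p j) *\<^sub>R wbar t)
          \<le> norm (w t j - (real n * p j) *\<^sub>R wbar t) + \<bar>y t j - real n * p j\<bar> * (norm wstar + R)" .
    qed
    also have "\<dots> \<le> \<delta> * (norm (w t j - (real n * p j) *\<^sub>R wbar t) + \<bar>y t j - real n * p j\<bar> * (norm wstar + R))"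
      using ydel[OF j] R_pos by (intro mult_right_mono add_nonneg_nonneg mult_nonneg_nonneg) auto
    finally show ?thesis by (simp add: algebra_simps)
  qed
  define S where "S = sqrt (\<Sum>j<n. 1 / p j)"
  define D1 where "D1 = \<delta> * c + S"
  define D2 where "D2 = L * \<delta> * c * norm wstar + pi_block_norm n p (\<lambda>i. g i wstar)"
  define Rb where "Rb = L * D1 * R + D2"
  have Rb0: "Rb \<ge> 0"
  proof -
    have "S \<ge> 0" unfolding S_def using p_pos by (intro real_sqrt_ge_zero sum_nonneg) auto
    moreover have "pi_block_norm n p (\<lambda>i. g i wstar) \<ge> 0" unfolding blk_as_pi by (rule pi_norm_nonneg'[OF p_pos])
    ultimately show ?thesis unfolding Rb_def D1_def D2_def using Lpos df(2) c0 R_pos by simp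
  qed
  have gbound: "pi_block_norm n p (\<lambda>j. g j (z t j)) \<le> L * \<delta> * e t + Rb" for t
  proof -
    let ?A = "\<lambda>j. norm (w t j - (real n * p j) *\<^sub>R wbar t)"
    let ?B = "\<lambda>j. \<bar>y t j - real n * p j\<bar>"
    have "pi_block_norm n p (\<lambda>j. g j (z t j))
        \<le> pi_norm n p (\<lambda>j. (L * \<delta>) * ?A j + (L * \<delta> * (norm wstar + R)) * ?B j + (L * R) * 1 + norm (g j wstar))"
      unfolding blk_as_pi
    proof (rule pi_norm_mono[OF p_pos], intro allI impI)
      fix j assume j: "j < n"
      have zw: "norm (z t j - wstar) \<le> (\<delta> * ?A j + \<delta> * (norm wstar + R) * ?B j) + R"
      proof -
        have "norm (z t j - wstar) \<le> norm (z t j - wbar t) + norm (wbar t - wstar)"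
          using norm_triangle_ineq[of "z t j - wbar t" "wbar t - wstar"] by simp
        then show ?thesis using zdev[OF j, of t] R_bound[rule_format, of t] by linarith
      qed
      have "norm (g j (z t j)) \<le> norm (g j (z t j) - g j wstar) + norm (g j wstar)"
        using norm_triangle_ineq2[of "g j (z t j)" "g j wstar"] by simp
      also have "\<dots> \<le> L * norm (z t j - wstar) + norm (g j wstar)"
        using Lip[OF j] by simp
      also have "\<dots> \<le> L * ((\<delta> * ?A j + \<delta> * (norm wstar + R) * ?B j) + R) + norm (g j wstar)"
        using zw Lpos by (intro add_right_mono mult_left_mono) auto
      finally have "norm (g j (z t j)) \<le> L * ((\<delta> * ?A j + \<delta> * (norm wstar + R) * ?B j) + R) + norm (g j wstar)" .
      then show "\<bar>norm (g j (z t j))\<bar> \<le> (L * \<delta>) * ?A j + (L * \<delta> * (norm wstar + R)) * ?B j + (L * R) * 1 + norm (g j wstar)"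
        by (simp add: algebra_simps)
    qed
    also have "\<dots> \<le> pi_norm n p (\<lambda>j. (L * \<delta>) * ?A j) + pi_norm n p (\<lambda>j. (L * \<delta> * (norm wstar + R)) * ?B j)
        + pi_norm n p (\<lambda>j. (L * R) * 1) + pi_norm n p (\<lambda>j. norm (g j wstar))"
      by (rule pi_norm_tri4[OF p_pos])
    also have "\<dots> = (L * \<delta>) * e t + (L * \<delta> * (norm wstar + R)) * pi_norm n p (\<lambda>j. y t j - real n * p j)
        + (L * R) * S + pi_block_norm n p (\<lambda>i. g i wstar)"
    proof -
      have nn: "L * \<delta> \<ge> 0" "L * \<delta> * (norm wstar + R) \<ge> 0" "L * R \<ge> 0"
        using Lpos df(2) R_pos by auto
      show ?thesis
        unfolding pi_norm_scale[OF p_pos] pi_norm_abs pi_norm_one e_def blk_as_pi S_def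
        using nn by simp
    qed
    also have "\<dots> \<le> (L * \<delta>) * e t + (L * \<delta> * (norm wstar + R)) * c + (L * R) * S + pi_block_norm n p (\<lambda>i. g i wstar)"
      using ydev'[of t] Lpos df(2) R_pos by (intro add_mono mult_left_mono order_refl) auto
    also have "\<dots> = L * \<delta> * e t + Rb" unfolding Rb_def D1_def D2_def by (simp add: algebra_simps)
    finally show ?thesis .
  qed
  have e_rec: "\<forall>t. e (Suc t) \<le> \<rho> * e t + \<alpha> * \<sigma> * Rb"
  proof
    fix t
    have "e (Suc t) \<le> \<sigma> * (e t + \<alpha> * (L * \<delta> * e t + Rb))"
      using e_step1[of t] e_step2[of t] gbound[of t] \<sigma>0 alpha_pos
      by (smt (verit) mult_left_mono)
    then show "e (Suc t) \<le> \<rho> * e t + \<alpha> * \<sigma> * Rb" unfolding \<rho>_def by (simp add: algebra_simps)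
  qed
  have e_bound: "\<forall>t. e t \<le> \<rho> ^ t * e 0 + \<alpha> * \<sigma> * Rb / (1 - \<rho>)"
    using unroll_e[OF e_rec \<rho>0 \<rho>1] alpha_pos \<sigma>0 Rb0 by simp
  have a_rec: "\<forall>t. norm (wbar (Suc t) - wstar) \<le> (1 - \<gamma> * \<alpha>) * norm (wbar t - wstar)
      + \<alpha> * L * \<delta> / real n * (e t + \<sigma> ^ t * (c * (norm wstar + R)))"
  proof
    fix t
    let ?A = "\<lambda>j. norm (w t j - (real n * p j) *\<^sub>R wbar t)"
    let ?B = "\<lambda>j. \<bar>y t j - real n * p j\<bar>"
    let ?V = "\<Sum>j<n. g j (wbar t) - g j (z t j)"
    have dec: "wbar (Suc t) - wstar = (wbar t - \<alpha> *\<^sub>R G (wbar t) - wstar) + (\<alpha> / real n) *\<^sub>R ?V"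
      unfolding wbar_step G_def by (simp add: sum_subtractf scaleR_diff_right algebra_simps)
    have sA: "(\<Sum>j<n. ?A j) \<le> e t"
      using pi_norm_sum_abs[OF p_pos p_sum, of ?A] unfolding e_def blk_as_pi by simp
    have sB: "(\<Sum>j<n. ?B j) \<le> \<sigma> ^ t * c"
      using pi_norm_sum_abs[OF p_pos p_sum, of "\<lambda>j. y t j - real n * p j"] ydev[of t] by simp
    have "norm ?V \<le> (\<Sum>j<n. norm (g j (wbar t) - g j (z t j)))" by (rule norm_sum)
    also have "\<dots> \<le> (\<Sum>j<n. L * (\<delta> * ?A j + \<delta> * (norm wstar + R) * ?B j))"
    proof (rule sum_mono)
      fix j assume "j \<in> {..<n}"
      then have j: "j < n" by simp
      have "norm (g j (wbar t) - g j (z t j)) \<le> L * norm (wbar t - z t j)" by (rule Lip[OF j])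
      also have "\<dots> = L * norm (z t j - wbar t)" by (simp add: norm_minus_commute)
      also have "\<dots> \<le> L * (\<delta> * ?A j + \<delta> * (norm wstar + R) * ?B j)"
        using zdev[OF j, of t] Lpos by (intro mult_left_mono) auto
      finally show "norm (g j (wbar t) - g j (z t j)) \<le> L * (\<delta> * ?A j + \<delta> * (norm wstar + R) * ?B j)" .
    qed
    also have "\<dots> = L * \<delta> * (\<Sum>j<n. ?A j) + L * \<delta> * (norm wstar + R) * (\<Sum>j<n. ?B j)"
      by (simp add: sum.distrib sum_distrib_left algebra_simps)
    also have "\<dots> \<le> L * \<delta> * e t + L * \<delta> * (norm wstar + R) * (\<sigma> ^ t * c)"
      using sA sB Lpos df(2) R_pos by (intro add_mono mult_left_mono) auto
    finally have nV: "norm ?V \<le> L * \<delta> * e t + L * \<delta> * (norm wstar + R) * (\<sigma> ^ t * c)" .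
    have "norm (wbar (Suc t) - wstar) \<le> norm (wbar t - \<alpha> *\<^sub>R G (wbar t) - wstar) + norm ((\<alpha> / real n) *\<^sub>R ?V)"
      unfolding dec by (rule norm_triangle_ineq)
    also have "\<dots> \<le> (1 - \<alpha> * \<gamma>) * norm (wbar t - wstar) + (\<alpha> / real n) * (L * \<delta> * e t + L * \<delta> * (norm wstar + R) * (\<sigma> ^ t * c))"
    proof (rule add_mono)
      show "norm (wbar t - \<alpha> *\<^sub>R G (wbar t) - wstar) \<le> (1 - \<alpha> * \<gamma>) * norm (wbar t - wstar)"
        by (rule contr)
      have "norm ((\<alpha> / real n) *\<^sub>R ?V) = (\<alpha> / real n) * norm ?V" using alpha_pos by simp
      also have "\<dots> \<le> (\<alpha> / real n) * (L * \<delta> * e t + L * \<delta> * (norm wstar + R) * (\<sigma> ^ t * c))"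
        using nV alpha_pos by (intro mult_left_mono) auto
      finally show "norm ((\<alpha> / real n) *\<^sub>R ?V) \<le> (\<alpha> / real n) * (L * \<delta> * e t + L * \<delta> * (norm wstar + R) * (\<sigma> ^ t * c))" .
    qed
    also have "\<dots> = (1 - \<gamma> * \<alpha>) * norm (wbar t - wstar) + \<alpha> * L * \<delta> / real n * (e t + \<sigma> ^ t * (c * (norm wstar + R)))"
      by (simp add: algebra_simps)
    finally show "norm (wbar (Suc t) - wstar) \<le> (1 - \<gamma> * \<alpha>) * norm (wbar t - wstar)
      + \<alpha> * L * \<delta> / real n * (e t + \<sigma> ^ t * (c * (norm wstar + R)))" .
  qed
  have fin: "norm (wbar t - wstar) \<le> (1 - \<gamma> * \<alpha>) ^ t * norm (wbar 0 - wstar)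
      + \<alpha> * L * \<delta> / real n * e 0 * real t * (max (1 - \<gamma> * \<alpha>) \<rho>) ^ (t - 1)
      + \<alpha> * L * \<delta> / real n * (c * (norm wstar + R)) * real t * (max (1 - \<gamma> * \<alpha>) \<sigma>) ^ (t - 1)
      + \<alpha> * L * \<delta> / real n * (\<alpha> * \<sigma> * Rb / (1 - \<rho>)) / (1 - (1 - \<gamma> * \<alpha>))" for t
    by (rule unroll_a[where a="\<lambda>t. norm (wbar t - wstar)", OF a_rec e_bound])
       (use ag alpha_pos Lpos df(2) n_pos \<sigma>0 \<rho>0 \<rho>1 c0 R_pos Rb0 e0 in \<open>auto intro!: divide_nonneg_pos mult_nonneg_nonneg\<close>)
  have last: "\<alpha> * L * \<delta> / real n * (\<alpha> * \<sigma> * Rb / (1 - \<rho>)) / (1 - (1 - \<gamma> * \<alpha>))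
      = \<alpha> * L * \<delta> / (real n * \<gamma>) * (\<sigma> * Rb / (1 - \<rho>))"
  proof -
    have gp: "\<gamma> > 0" using ag(2) alpha_pos by (simp add: zero_less_mult_iff)
    have r: "1 - \<rho> \<noteq> 0" using \<rho>1 by simp
    have nn: "real n \<noteq> 0" using n_pos by simp
    show ?thesis using alpha_pos gp r nn by (simp add: field_simps)
  qed
  have main: "\<forall>t. e t \<le> \<rho> ^ t * e 0 + \<alpha> * \<sigma> * Rb / (1 - \<rho>)
      \<and> norm (wbar t - wstar) \<le> (1 - \<gamma> * \<alpha>) ^ t * norm (wbar 0 - wstar)
      + \<alpha> * L * \<delta> / real n * e 0 * real t * (max (1 - \<gamma> * \<alpha>) \<rho>) ^ (t - 1)
      + \<alpha> * L * \<delta> / real n * c * (norm wstar + R) * real t * (max (1 - \<gamma> * \<alpha>) \<sigma>) ^ (t - 1)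
      + \<alpha> * L * \<delta> / (real n * \<gamma>) * (\<sigma> * Rb / (1 - \<rho>))"
    using e_bound fin last by (simp add: mult.assoc)
  show ?thesis
    unfolding Let_def using main unfolding \<rho>_def c_def S_def D1_def D2_def Rb_def e_def .
qed

end
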